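(* With $\widehat{T}=UTU^*$, we have $\widehat{H}=1-S^*$, $\widehat{X}=S^*C_\gamma^*$, and $\widehat{V}=(1-S^* )C_\gamma^*$.
   Context: $H^2$ is the Hardy space of the unit disc $\mathbb{D}$, $k_\alpha(z)=\frac{1}{1-\bar\alpha z}$. The Sarason transform $U$ is the unique unitary operator from $L^2([0,1])$ onto $H^2$ with $U(x^n)=\frac{1}{n+1}k_{\frac{n}{n+1}}$ for integers $n\ge0$. On $L^2([0,1])$: $Hf(x)=\frac1x\int_0^xf(t)\,dt$ (Hardy operator), $Xf(x)=xf(x)$, and $Vf(x)=\int_0^xf(t)\,dt$. $S$ is the unilateral shift (multiplication by $z$) on $H^2$, $\gamma(z)=\frac{1}{2-z}$, and $C_\gamma$ is the composition operator $h\mapsto h\circ\gamma$ on $H^2$. *)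

theory Defs
  imports "HOL-Analysis.Analysis" "HOL-Complex_Analysis.Complex_Analysis"
begin

definition disc :: "complex set" where
  "disc = ball 0 1"

definition taylor_coeff :: "(complex \<Rightarrow> complex) \<Rightarrow> nat \<Rightarrow> complex" where
  "taylor_coeff f n = (deriv ^^ n) f 0 / of_nat (fact n)"

text \<open>H^2: holomorphic functions on the disc with square-summable Taylor coefficients.
  Elements are identified when they agree on the disc.\<close>
definition H2 :: "(complex \<Rightarrow> complex) set" where
  "H2 = {f. f holomorphic_on disc \<and> summable (\<lambda>n. (cmod (taylor_coeff f n))\<^sup>2)}"

definition H2_inner :: "(complex \<Rightarrow> complex) \<Rightarrow> (complex \<Rightarrow> complex) \<Rightarrow> complex" where
  "H2_inner f g = (\<Sum>n. taylor_coeff f n * cnj (taylor_coeff g n))"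

definition H2_eq :: "(complex \<Rightarrow> complex) \<Rightarrow> (complex \<Rightarrow> complex) \<Rightarrow> bool" where
  "H2_eq f g \<longleftrightarrow> (\<forall>z\<in>disc. f z = g z)"

definition kernel :: "complex \<Rightarrow> complex \<Rightarrow> complex" where
  "kernel \<alpha> z = 1 / (1 - cnj \<alpha> * z)"

definition shift :: "(complex \<Rightarrow> complex) \<Rightarrow> (complex \<Rightarrow> complex)" where
  "shift f = (\<lambda>z. z * f z)"

definition gamma :: "complex \<Rightarrow> complex" where
  "gamma z = 1 / (2 - z)"

definition comp_gamma :: "(complex \<Rightarrow> complex) \<Rightarrow> (complex \<Rightarrow> complex)" where
  "comp_gamma h = h \<circ> gamma"

definition H2_adjoint_of ::
  "((complex \<Rightarrow> complex) \<Rightarrow> (complex \<Rightarrow> complex)) \<Rightarrow> ((complex \<Rightarrow> complex) \<Rightarrow> (complex \<Rightarrow> complex)) \<Rightarrow> bool" where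
  "H2_adjoint_of A T \<longleftrightarrow> (\<forall>g\<in>H2. A g \<in> H2) \<and>
     (\<forall>f\<in>H2. \<forall>g\<in>H2. H2_inner (T f) g = H2_inner f (A g))"

text \<open>Square-integrable complex functions on [0,1] (values outside [0,1] are irrelevant;
  elements are identified up to a.e. equality through the inner product).\<close>
definition L2 :: "(real \<Rightarrow> complex) set" where
  "L2 = {f. f \<in> borel_measurable (lebesgue_on {0..1}) \<and>
            integrable (lebesgue_on {0..1}) (\<lambda>x. (cmod (f x))\<^sup>2)}"

definition L2_inner :: "(real \<Rightarrow> complex) \<Rightarrow> (real \<Rightarrow> complex) \<Rightarrow> complex" where
  "L2_inner f g = integral\<^sup>L (lebesgue_on {0..1}) (\<lambda>x. f x * cnj (g x))"

definition hardy_op :: "(real \<Rightarrow> complex) \<Rightarrow> (real \<Rightarrow> complex)" where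
  "hardy_op f = (\<lambda>x. (1 / complex_of_real x) * integral\<^sup>L (lebesgue_on {0..x}) f)"

definition mult_x :: "(real \<Rightarrow> complex) \<Rightarrow> (real \<Rightarrow> complex)" where
  "mult_x f = (\<lambda>x. complex_of_real x * f x)"

definition volterra :: "(real \<Rightarrow> complex) \<Rightarrow> (real \<Rightarrow> complex)" where
  "volterra f = (\<lambda>x. integral\<^sup>L (lebesgue_on {0..x}) f)"

definition sarason_transform :: "((real \<Rightarrow> complex) \<Rightarrow> (complex \<Rightarrow> complex)) \<Rightarrow> bool" where
  "sarason_transform U \<longleftrightarrow>
     (\<forall>f\<in>L2. U f \<in> H2) \<and>
     (\<forall>f\<in>L2. \<forall>g\<in>L2. \<forall>a b. H2_eq (U (\<lambda>x. a * f x + b * g x)) (\<lambda>z. a * U f z + b * U g z)) \<and>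
     (\<forall>f\<in>L2. \<forall>g\<in>L2. H2_inner (U f) (U g) = L2_inner f g) \<and>
     (\<forall>h\<in>H2. \<exists>f\<in>L2. H2_eq (U f) h) \<and>
     (\<forall>n::nat. H2_eq (U (\<lambda>x. complex_of_real (x ^ n)))
                      (\<lambda>z. (1 / of_nat (n + 1)) * kernel (of_real (real n / real (n + 1))) z))"

text \<open>For T on L^2, "U T U^* = A" on H^2: for every g in H^2, U^* g is (up to a.e.)
  the f in L^2 with U f = g, and the claim is U (T f) = A g.\<close>
definition conj_eq ::
  "((real \<Rightarrow> complex) \<Rightarrow> (complex \<Rightarrow> complex)) \<Rightarrow> ((real \<Rightarrow> complex) \<Rightarrow> (real \<Rightarrow> complex))
    \<Rightarrow> ((complex \<Rightarrow> complex) \<Rightarrow> (complex \<Rightarrow> complex)) \<Rightarrow> bool" where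
  "conj_eq U T A \<longleftrightarrow> (\<forall>g\<in>H2. \<forall>f\<in>L2. H2_eq (U f) g \<longrightarrow> H2_eq (U (T f)) (A g))"

end

theory Submission
  imports Defs
begin

lemma deriv_iter_cong:
  assumes "open S" "\<forall>z\<in>S. f z = g z" "z \<in> S"
  shows "(deriv ^^ n) f z = (deriv ^^ n) g z"
  using assms(3)
proof (induction n arbitrary: z)
  case 0
  then show ?case using assms(2) by simp
next
  case (Suc n)
  have ev: "eventually (\<lambda>w. (deriv ^^ n) f w = (deriv ^^ n) g w) (nhds z)"
    using eventually_nhds_in_open[OF assms(1) Suc.prems] by (rule eventually_mono) (use Suc.IH in auto)
  show ?case by (simp add: deriv_cong_ev[OF ev refl])
qed

lemma zero_in_disc[simp]: "0 \<in> disc" by (simp add: disc_def)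
lemma open_disc[simp]: "open disc" by (simp add: disc_def)

lemma taylor_coeff_cong:
  assumes "H2_eq f g" shows "taylor_coeff f n = taylor_coeff g n"
  using deriv_iter_cong[OF open_disc _ zero_in_disc, of f g n] assms
  by (simp add: taylor_coeff_def H2_eq_def)

lemma H2_inner_cong:
  assumes "H2_eq f f'" "H2_eq g g'" shows "H2_inner f g = H2_inner f' g'"
  using taylor_coeff_cong[OF assms(1)] taylor_coeff_cong[OF assms(2)]
  by (simp add: H2_inner_def)

lemma H2_eq_sym: "H2_eq f g \<Longrightarrow> H2_eq g f" by (simp add: H2_eq_def)
lemma H2_eq_trans: "H2_eq f g \<Longrightarrow> H2_eq g h \<Longrightarrow> H2_eq f h" by (simp add: H2_eq_def)
lemma H2_eq_refl: "H2_eq f f" by (simp add: H2_eq_def)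

lemma H2_summable_prod:
  assumes "u \<in> H2" "v \<in> H2"
  shows "summable (\<lambda>n. taylor_coeff u n * cnj (taylor_coeff v n))"
proof (rule summable_comparison_test)
  have su: "summable (\<lambda>n. (cmod (taylor_coeff u n))\<^sup>2)" and sv: "summable (\<lambda>n. (cmod (taylor_coeff v n))\<^sup>2)"
    using assms by (auto simp: H2_def)
  show "summable (\<lambda>n. (cmod (taylor_coeff u n))\<^sup>2 + (cmod (taylor_coeff v n))\<^sup>2)"
    using summable_add[OF su sv] .
  show "\<exists>N. \<forall>n\<ge>N. norm (taylor_coeff u n * cnj (taylor_coeff v n)) \<le> (cmod (taylor_coeff u n))\<^sup>2 + (cmod (taylor_coeff v n))\<^sup>2"
  proof (intro exI allI impI)
    fix n
    define a where "a = cmod (taylor_coeff u n)"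
    define b where "b = cmod (taylor_coeff v n)"
    have "a * b \<le> a\<^sup>2 + b\<^sup>2" using sum_squares_ge_zero[of a b]
    proof -
      have "0 \<le> (a - b)\<^sup>2" by simp
      moreover have "0 \<le> a * b" by (simp add: a_def b_def)
      ultimately show ?thesis by (simp add: power2_diff)
    qed
    then show "norm (taylor_coeff u n * cnj (taylor_coeff v n)) \<le> (cmod (taylor_coeff u n))\<^sup>2 + (cmod (taylor_coeff v n))\<^sup>2"
      by (simp add: norm_mult a_def b_def)
  qed
qed

lemma H2_inner_cnj:
  assumes "u \<in> H2" "v \<in> H2"
  shows "H2_inner v u = cnj (H2_inner u v)"
proof -
  have "(\<lambda>n. taylor_coeff u n * cnj (taylor_coeff v n)) sums H2_inner u v"
    unfolding H2_inner_def using H2_summable_prod[OF assms] by (rule summable_sums)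
  then have "(\<lambda>n. cnj (taylor_coeff u n * cnj (taylor_coeff v n))) sums cnj (H2_inner u v)"
    by (simp only: sums_cnj)
  then have "(\<lambda>n. taylor_coeff v n * cnj (taylor_coeff u n)) sums cnj (H2_inner u v)"
    by (simp add: mult.commute)
  then show ?thesis unfolding H2_inner_def by (rule sums_unique[symmetric])
qed

lemma H2_norm_zero:
  assumes "u \<in> H2" "H2_inner u u = 0"
  shows "\<forall>z\<in>disc. u z = 0"
proof -
  have su: "summable (\<lambda>n. (cmod (taylor_coeff u n))\<^sup>2)" using assms by (auto simp: H2_def)
  have eq: "taylor_coeff u n * cnj (taylor_coeff u n) = complex_of_real ((cmod (taylor_coeff u n))\<^sup>2)" for n
    using complex_norm_square[of "taylor_coeff u n"] by simp
  have "complex_of_real (\<Sum>n. (cmod (taylor_coeff u n))\<^sup>2) = 0"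
    using assms(2) unfolding H2_inner_def eq suminf_of_real[OF su] .
  then have "(\<Sum>n. (cmod (taylor_coeff u n))\<^sup>2) = 0" by simp
  then have "\<forall>n. (cmod (taylor_coeff u n))\<^sup>2 = 0" using suminf_eq_zero_iff[OF su] by simp
  then have c0: "\<And>n. taylor_coeff u n = 0" by simp
  show ?thesis
  proof
    fix z assume z: "z \<in> disc"
    have hol: "u holomorphic_on ball 0 1" using assms(1) by (simp add: H2_def disc_def)
    have "(\<lambda>n. (deriv ^^ n) u 0 / fact n * (z - 0) ^ n) sums u z"
      using holomorphic_power_series[OF hol] z by (simp add: disc_def)
    moreover have "(\<lambda>n. (deriv ^^ n) u 0 / fact n * (z - 0) ^ n) = (\<lambda>n. 0)"
      using c0 by (simp add: taylor_coeff_def)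
    ultimately have "(\<lambda>n. 0) sums u z" by simp
    then show "u z = 0" by (metis sums_zero sums_unique2)
  qed
qed

lemma borel_measurable_cnj[measurable]:
  "g \<in> borel_measurable M \<Longrightarrow> (\<lambda>x. cnj (g x)) \<in> borel_measurable M"
proof -
  assume g: "g \<in> borel_measurable M"
  have "(\<lambda>x. cnj x) \<in> borel_measurable borel"
    by (rule borel_measurable_continuous_onI) (intro continuous_intros)
  from measurable_compose[OF g this] show ?thesis .
qed

abbreviation "M01 \<equiv> lebesgue_on {0..1::real}"

lemma M01_finite: "finite_measure M01"
  by (rule finite_measure_lebesgue_on) simp

lemma M01_integrable_const: "integrable M01 (\<lambda>x. c::'a::{banach,second_countable_topology})"
  using finite_measure.integrable_const[OF M01_finite] .

lemma L2_measurable: "f \<in> L2 \<Longrightarrow> f \<in> borel_measurable M01"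
  by (simp add: L2_def)

lemma L2_sq_integrable: "f \<in> L2 \<Longrightarrow> integrable M01 (\<lambda>x. (cmod (f x))\<^sup>2)"
  by (simp add: L2_def)

lemma L2_integrable:
  assumes "f \<in> L2" shows "integrable M01 f"
proof (rule Bochner_Integration.integrable_bound)
  show "integrable M01 (\<lambda>x. 1 + (cmod (f x))\<^sup>2)"
    using M01_integrable_const L2_sq_integrable[OF assms] by (rule Bochner_Integration.integrable_add)
  show "f \<in> borel_measurable M01" using assms by (rule L2_measurable)
  show "AE x in M01. norm (f x) \<le> norm (1 + (cmod (f x))\<^sup>2)"
  proof (rule AE_I2)
    fix x
    have "cmod (f x) \<le> 1 + (cmod (f x))\<^sup>2"
    proof -
      have "0 \<le> (cmod (f x) - 1)\<^sup>2" by simp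
      then have "2 * cmod (f x) \<le> (cmod (f x))\<^sup>2 + 1" by (simp add: power2_diff)
      moreover have "0 \<le> cmod (f x)" by simp
      ultimately show ?thesis by linarith
    qed
    then show "norm (f x) \<le> norm (1 + (cmod (f x))\<^sup>2)" by simp
  qed
qed

lemma L2_prod_integrable:
  assumes "f \<in> L2" "g \<in> L2" shows "integrable M01 (\<lambda>x. f x * cnj (g x))"
proof (rule Bochner_Integration.integrable_bound)
  show "integrable M01 (\<lambda>x. (cmod (f x))\<^sup>2 + (cmod (g x))\<^sup>2)"
    using L2_sq_integrable[OF assms(1)] L2_sq_integrable[OF assms(2)] by (rule Bochner_Integration.integrable_add)
  show "(\<lambda>x. f x * cnj (g x)) \<in> borel_measurable M01"
    using L2_measurable[OF assms(1)] L2_measurable[OF assms(2)] by measurable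
  show "AE x in M01. norm (f x * cnj (g x)) \<le> norm ((cmod (f x))\<^sup>2 + (cmod (g x))\<^sup>2)"
  proof (rule AE_I2)
    fix x
    define a where "a = cmod (f x)"
    define b where "b = cmod (g x)"
    have "a * b \<le> a\<^sup>2 + b\<^sup>2"
    proof -
      have "0 \<le> (a - b)\<^sup>2" by simp
      moreover have "0 \<le> a * b" by (simp add: a_def b_def)
      ultimately show ?thesis by (simp add: power2_diff)
    qed
    then show "norm (f x * cnj (g x)) \<le> norm ((cmod (f x))\<^sup>2 + (cmod (g x))\<^sup>2)"
      by (simp add: norm_mult a_def b_def)
  qed
qed

lemma L2_lin:
  assumes "f \<in> L2" "g \<in> L2" shows "(\<lambda>x. a * f x + b * g x) \<in> L2"
proof -
  have m: "(\<lambda>x. a * f x + b * g x) \<in> borel_measurable M01"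
    using L2_measurable[OF assms(1)] L2_measurable[OF assms(2)] by measurable
  have "integrable M01 (\<lambda>x. (cmod (a * f x + b * g x))\<^sup>2)"
  proof (rule Bochner_Integration.integrable_bound)
    show "integrable M01 (\<lambda>x. 2 * (cmod a)\<^sup>2 * (cmod (f x))\<^sup>2 + 2 * (cmod b)\<^sup>2 * (cmod (g x))\<^sup>2)"
      using L2_sq_integrable[OF assms(1)] L2_sq_integrable[OF assms(2)]
      by (intro Bochner_Integration.integrable_add Bochner_Integration.integrable_mult_right)
    show "(\<lambda>x. (cmod (a * f x + b * g x))\<^sup>2) \<in> borel_measurable M01"
      using m by measurable
    show "AE x in M01. norm ((cmod (a * f x + b * g x))\<^sup>2) \<le> norm (2 * (cmod a)\<^sup>2 * (cmod (f x))\<^sup>2 + 2 * (cmod b)\<^sup>2 * (cmod (g x))\<^sup>2)"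
    proof (rule AE_I2)
      fix x
      define p where "p = cmod (a * f x)"
      define q where "q = cmod (b * g x)"
      have "cmod (a * f x + b * g x) \<le> p + q" unfolding p_def q_def by (rule norm_triangle_ineq)
      then have "(cmod (a * f x + b * g x))\<^sup>2 \<le> (p + q)\<^sup>2" by (simp add: power_mono)
      also have "\<dots> \<le> 2 * p\<^sup>2 + 2 * q\<^sup>2"
      proof -
        have "0 \<le> (p - q)\<^sup>2" by simp
        then show ?thesis by (simp add: power2_diff power2_sum)
      qed
      finally show "norm ((cmod (a * f x + b * g x))\<^sup>2) \<le> norm (2 * (cmod a)\<^sup>2 * (cmod (f x))\<^sup>2 + 2 * (cmod b)\<^sup>2 * (cmod (g x))\<^sup>2)"
        by (simp add: p_def q_def norm_mult power_mult_distrib)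
    qed
  qed
  then show ?thesis using m by (simp add: L2_def)
qed

lemma mono_L2: "(\<lambda>x. complex_of_real (x ^ n)) \<in> L2"
proof -
  have c: "continuous_on {0..1::real} (\<lambda>x. complex_of_real (x ^ n))"
    by (intro continuous_intros)
  have "continuous_on {0..1::real} (\<lambda>x. (cmod (complex_of_real (x ^ n)))\<^sup>2)"
    by (intro continuous_intros)
  then show ?thesis
    using continuous_imp_integrable_real continuous_imp_measurable_on_sets_lebesgue[OF c]
    by (auto simp: L2_def)
qed

lemma L2_inner_lin1:
  assumes "f \<in> L2" "g \<in> L2" "p \<in> L2"
  shows "L2_inner (\<lambda>x. a * f x + b * g x) p = a * L2_inner f p + b * L2_inner g p"
proof -
  have "L2_inner (\<lambda>x. a * f x + b * g x) p = integral\<^sup>L M01 (\<lambda>x. a * (f x * cnj (p x)) + b * (g x * cnj (p x)))"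
    unfolding L2_inner_def by (simp add: algebra_simps)
  also have "\<dots> = a * L2_inner f p + b * L2_inner g p"
    unfolding L2_inner_def
    using L2_prod_integrable[OF assms(1,3)] L2_prod_integrable[OF assms(2,3)] by simp
  finally show ?thesis .
qed

lemma L2_inner_cnj: "L2_inner g f = cnj (L2_inner f g)"
  unfolding L2_inner_def by (subst Bochner_Integration.integral_cnj[symmetric]) (simp add: mult.commute)

lemma L2_inner_lin2:
  assumes "f \<in> L2" "p \<in> L2" "q \<in> L2"
  shows "L2_inner f (\<lambda>x. a * p x + b * q x) = cnj a * L2_inner f p + cnj b * L2_inner f q"
  using L2_inner_lin1[OF assms(2,3,1), of a b] by (simp add: L2_inner_cnj[of f])

abbreviation mon :: "nat \<Rightarrow> real \<Rightarrow> complex" where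
  "mon n \<equiv> (\<lambda>x. complex_of_real (x ^ n))"

context
  fixes U :: "(real \<Rightarrow> complex) \<Rightarrow> (complex \<Rightarrow> complex)"
  assumes U: "sarason_transform U"
begin

lemma U_H2: "f \<in> L2 \<Longrightarrow> U f \<in> H2"
  using U by (simp add: sarason_transform_def)
lemma U_lin: "f \<in> L2 \<Longrightarrow> g \<in> L2 \<Longrightarrow> H2_eq (U (\<lambda>x. a * f x + b * g x)) (\<lambda>z. a * U f z + b * U g z)"
  using U by (simp add: sarason_transform_def)
lemma U_inner: "f \<in> L2 \<Longrightarrow> g \<in> L2 \<Longrightarrow> H2_inner (U f) (U g) = L2_inner f g"
  using U by (simp add: sarason_transform_def)
lemma U_surj: "h \<in> H2 \<Longrightarrow> \<exists>f\<in>L2. H2_eq (U f) h"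
  using U by (simp add: sarason_transform_def)
lemma U_mon: "H2_eq (U (mon n)) (\<lambda>z. (1 / of_nat (n + 1)) * kernel (of_real (real n / real (n + 1))) z)"
  using U unfolding sarason_transform_def by blast

lemma adj_moment:
  assumes B: "H2_adjoint_of B Op" and w: "w \<in> H2" and c: "c \<in> L2" and wc: "H2_eq w (U c)"
    and y: "y \<in> L2" and yB: "H2_eq (U y) (B w)" and r: "r \<in> L2" and Or: "H2_eq (Op (U (mon n))) (U r)"
  shows "L2_inner y (mon n) = L2_inner c r"
proof -
  have m: "U (mon n) \<in> H2" using U_H2 mono_L2 by blast
  have Bw: "B w \<in> H2" using B w by (simp add: H2_adjoint_of_def)
  have "L2_inner y (mon n) = H2_inner (U y) (U (mon n))" using U_inner[OF y mono_L2] by simp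
  also have "\<dots> = H2_inner (B w) (U (mon n))" by (rule H2_inner_cong[OF yB H2_eq_refl])
  also have "\<dots> = cnj (H2_inner (U (mon n)) (B w))" by (rule H2_inner_cnj[OF m Bw])
  also have "H2_inner (U (mon n)) (B w) = H2_inner (Op (U (mon n))) w"
    using B m w by (simp add: H2_adjoint_of_def)
  also have "\<dots> = H2_inner (U r) (U c)" by (rule H2_inner_cong[OF Or wc])
  also have "\<dots> = L2_inner r c" by (rule U_inner[OF r c])
  finally show ?thesis by (simp add: L2_inner_cnj[of c r])
qed

end

lemma H2_eqD: "H2_eq f g \<Longrightarrow> z \<in> disc \<Longrightarrow> f z = g z"
  by (simp add: H2_eq_def)

lemma alg1:
  fixes c z D :: complex
  assumes "c \<noteq> 0" "D \<noteq> 0" "D = c + 1 - c * z"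
  shows "z * (1 / D) = ((c + 1) / c) * (1 / D) + (-1 / c) * 1"
proof -
  have z: "z = (c + 1 - D) / c" using assms by (simp add: field_simps)
  show ?thesis unfolding z using assms(1,2) by (simp add: field_simps)
qed

lemma alg2:
  fixes c z E :: complex
  assumes "c + 1 \<noteq> 0" "E \<noteq> 0" "E = c + 2 - (c + 1) * z"
  shows "(2 - z) / E = (1 / (c + 1)) * 1 + (c / (c + 1)) * (1 / E)"
proof -
  have z: "z = (c + 2 - E) / (c + 1)" using assms by (simp add: field_simps)
  have "2 - z = (c + E) / (c + 1)" unfolding z using assms(1) by (simp add: field_simps)
  then have "(2 - z) / E = (c + E) / ((c + 1) * E)" by simp
  also have "\<dots> = E / ((c + 1) * E) + c / ((c + 1) * E)" by (simp add: add_divide_distrib add.commute)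
  also have "E / ((c + 1) * E) = 1 / (c + 1)" using assms(2) by simp
  also have "c / ((c + 1) * E) = (c / (c + 1)) * (1 / E)" by simp
  finally show ?thesis by simp
qed

lemma disc_norm: "z \<in> disc \<longleftrightarrow> cmod z < 1" by (simp add: disc_def)

lemma den_nz:
  assumes "z \<in> disc" shows "of_nat n + 1 - of_nat n * z \<noteq> (0::complex)"
proof
  assume h: "of_nat n + 1 - of_nat n * z = 0"
  then have "of_nat n * z = of_nat n + 1" by (simp add: algebra_simps)
  then have "cmod (of_nat n * z) = real n + 1"
    by (metis norm_of_nat of_nat_Suc Suc_eq_plus1 add.commute)
  then have "real n * cmod z = real n + 1" by (simp add: norm_mult)
  moreover have "real n * cmod z \<le> real n" using assms by (simp add: disc_norm mult_left_le)
  ultimately show False by simp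
qed

lemma kernel_eq:
  assumes "z \<in> disc"
  shows "kernel (of_real (real n / real (n + 1))) z = (of_nat n + 1) / (of_nat n + 1 - of_nat n * z)"
proof -
  have nz: "1 + of_nat n \<noteq> (0::complex)"
    by (metis of_nat_Suc of_nat_eq_0_iff nat.distinct(1) add.commute Suc_eq_plus1)
  have "1 - of_real (real n / real (n + 1)) * z = (of_nat n + 1 - of_nat n * z) / (of_nat n + 1)"
    using nz by (simp add: field_simps)
  then show ?thesis using den_nz[OF assms, of n] by (simp add: kernel_def)
qed

lemma gamma_disc:
  assumes "z \<in> disc" shows "gamma z \<in> disc"
proof -
  have "cmod z < 1" using assms by (simp add: disc_norm)
  have "2 - cmod z \<le> cmod (2 - z)" using norm_triangle_ineq2[of 2 z] by simp
  then have gt: "1 < cmod (2 - z)" using \<open>cmod z < 1\<close> by linarith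
  then have "cmod (gamma z) = 1 / cmod (2 - z)" by (simp add: gamma_def norm_divide)
  also have "\<dots> < 1" using gt by (simp add: divide_less_eq)
  finally show ?thesis by (simp add: disc_norm)
qed

lemma two_minus_nz: "z \<in> disc \<Longrightarrow> 2 - z \<noteq> 0"
  by (auto simp: disc_norm)

context
  fixes U :: "(real \<Rightarrow> complex) \<Rightarrow> (complex \<Rightarrow> complex)"
  assumes U: "sarason_transform U"
begin

lemma U_mon_val: "z \<in> disc \<Longrightarrow> U (mon n) z = 1 / (of_nat n + 1 - of_nat n * z)"
proof -
  assume z: "z \<in> disc"
  have nz: "1 + of_nat n \<noteq> (0::complex)"
    by (metis of_nat_Suc of_nat_eq_0_iff nat.distinct(1) add.commute Suc_eq_plus1)
  have "U (mon n) z = (1 / of_nat (n + 1)) * kernel (of_real (real n / real (n + 1))) z"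
    by (rule H2_eqD[OF U_mon[OF U, of n] z])
  also have "\<dots> = 1 / (of_nat n + 1 - of_nat n * z)"
    unfolding kernel_eq[OF z]
    using nz den_nz[OF z, of n] by (simp add: field_simps)
  finally show ?thesis .
qed

lemma shift_mon:
  assumes n: "n \<ge> 1"
  shows "H2_eq (shift (U (mon n))) (U (\<lambda>x. ((of_nat n + 1) / of_nat n) * mon n x + (-1 / of_nat n) * mon 0 x))"
  unfolding H2_eq_def
proof
  fix z assume z: "z \<in> disc"
  have lin: "U (\<lambda>x. ((of_nat n + 1) / of_nat n) * mon n x + (-1 / of_nat n) * mon 0 x) z
      = ((of_nat n + 1) / of_nat n) * U (mon n) z + (-1 / of_nat n) * U (mon 0) z"
    by (rule H2_eqD[OF U_lin[OF U mono_L2[of n] mono_L2[of 0]] z])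
  have e0: "U (mon 0) z = 1" using U_mon_val[OF z, of 0] by simp
  have nn: "(of_nat n :: complex) \<noteq> 0" using n by simp
  have d: "of_nat n + 1 - of_nat n * z \<noteq> 0" by (rule den_nz[OF z])
  show "shift (U (mon n)) z = U (\<lambda>x. ((of_nat n + 1) / of_nat n) * mon n x + (-1 / of_nat n) * mon 0 x) z"
    unfolding lin e0 shift_def U_mon_val[OF z]
    by (rule alg1[OF nn d refl])
qed

lemma gamma_mon:
  shows "H2_eq (comp_gamma (U (mon n))) (U (\<lambda>x. (1 / (of_nat n + 1)) * mon 0 x + (of_nat n / (of_nat n + 1)) * mon (n + 1) x))"
  unfolding H2_eq_def
proof
  fix z assume z: "z \<in> disc"
  have lin: "U (\<lambda>x. (1 / (of_nat n + 1)) * mon 0 x + (of_nat n / (of_nat n + 1)) * mon (n + 1) x) z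
      = (1 / (of_nat n + 1)) * U (mon 0) z + (of_nat n / (of_nat n + 1)) * U (mon (n + 1)) z"
    by (rule H2_eqD[OF U_lin[OF U mono_L2[of 0] mono_L2[of "n+1"]] z])
  have e0: "U (mon 0) z = 1" using U_mon_val[OF z, of 0] by simp
  have e1: "U (mon (n + 1)) z = 1 / (of_nat n + 2 - (of_nat n + 1) * z)"
    using U_mon_val[OF z, of "n + 1"] by (simp add: algebra_simps)
  have g: "comp_gamma (U (mon n)) z = 1 / (of_nat n + 1 - of_nat n * gamma z)"
    using U_mon_val[OF gamma_disc[OF z], of n] by (simp add: comp_gamma_def)
  have d1: "of_nat n + 1 - of_nat n * gamma z \<noteq> 0" by (rule den_nz[OF gamma_disc[OF z]])
  have d2: "of_nat n + 2 - (of_nat n + 1) * z \<noteq> 0"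
    using den_nz[OF z, of "n + 1"] by (simp add: algebra_simps)
  have t: "2 - z \<noteq> 0" by (rule two_minus_nz[OF z])
  have nz: "1 + of_nat n \<noteq> (0::complex)"
    by (metis of_nat_Suc of_nat_eq_0_iff nat.distinct(1) add.commute Suc_eq_plus1)
  have "of_nat n + 1 - of_nat n * gamma z = (of_nat n + 2 - (of_nat n + 1) * z) / (2 - z)"
    using t by (simp add: gamma_def field_simps)
  then have g': "comp_gamma (U (mon n)) z = (2 - z) / (of_nat n + 2 - (of_nat n + 1) * z)"
    using g d2 t by simp
  show "comp_gamma (U (mon n)) z = U (\<lambda>x. (1 / (of_nat n + 1)) * mon 0 x + (of_nat n / (of_nat n + 1)) * mon (n + 1) x) z"
    unfolding lin e0 e1 g'
    by (rule alg2[OF _ d2 refl]) (use nz in \<open>simp add: add.commute\<close>)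
qed

end

lemma M01_restrict: "M01 = restrict_space lebesgue {0..1}" by simp

lemma integral_lebesgue_on_indicator:
  fixes e :: "real \<Rightarrow> complex"
  shows "integral\<^sup>L (lebesgue_on {a..b}) e = integral\<^sup>L lebesgue (\<lambda>x. indicator {a..b} x *\<^sub>R e x)"
  by (rule integral_restrict_space) simp

lemma ae_zero_of_intervals:
  fixes e :: "real \<Rightarrow> complex"
  assumes int: "integrable M01 e" and z: "\<And>c. c \<in> {0..1} \<Longrightarrow> integral\<^sup>L (lebesgue_on {0..c}) e = 0"
  shows "AE x in M01. e x = 0"
proof -
  define E where "E x = indicator {0..1::real} x *\<^sub>R e x" for x
  have intE: "integrable lebesgue E"
    using int unfolding E_def by (subst (asm) integrable_restrict_space) auto
  have step1: "integral\<^sup>L lebesgue (\<lambda>x. indicator {0..c} x *\<^sub>R e x) = 0" if "c \<le> 1" for c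
  proof (cases "0 \<le> c")
    case True
    then show ?thesis using z[of c] that integral_lebesgue_on_indicator[of 0 c e] by simp
  next
    case False
    then have "{0..c} = {}" by auto
    then show ?thesis by simp
  qed
  have basicI: "set_lebesgue_integral lebesgue {..y} E = 0" for y
  proof -
    have "indicator {..y} x *\<^sub>R E x = indicator {0..min y 1} x *\<^sub>R e x" for x
      by (auto simp: E_def indicator_def)
    then show ?thesis unfolding set_lebesgue_integral_def using step1[of "min y 1"] by simp
  qed
  have all: "set_lebesgue_integral lebesgue UNIV E = 0"
  proof -
    have "indicator UNIV x *\<^sub>R E x = indicator {0..1} x *\<^sub>R e x" for x
      by (auto simp: E_def indicator_def)
    then show ?thesis unfolding set_lebesgue_integral_def using step1[of 1] by simp
  qed
  have borel_sets: "set_lebesgue_integral lebesgue A E = 0" if A: "A \<in> sets borel" for A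
  proof -
    have sb: "sets (borel::real measure) = sigma_sets UNIV (range (\<lambda>a. {..a::real}))"
      by (subst borel_eq_atMost) (rule sets_measure_of, simp)
    have b2l: "B \<in> sets lebesgue" if "B \<in> sigma_sets UNIV (range (\<lambda>a. {..a::real}))" for B
      using that unfolding sb[symmetric] by simp
    have Aeq: "A \<in> sigma_sets UNIV (range (\<lambda>a. {..a::real}))"
      using A sb by simp
    have ist: "Int_stable (range (\<lambda>a. {..a::real}))"
      unfolding Int_stable_def
    proof (clarify)
      fix a b :: real
      have "{..a} \<inter> {..b} = {..min a b}" by auto
      then show "{..a} \<inter> {..b} \<in> range atMost" by blast
    qed
    have pw: "range (\<lambda>a. {..a::real}) \<subseteq> Pow UNIV" by simp
    show ?thesis
    using ist pw Aeq
    proof (induction rule: sigma_sets_induct_disjoint)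
      case (basic A)
      then show ?case using basicI by auto
    next
      case empty
      then show ?case by (simp add: set_lebesgue_integral_def)
    next
      case (compl A)
      have As: "A \<in> sets lebesgue"
        using compl.hyps by (rule b2l)
      have "set_lebesgue_integral lebesgue (UNIV - A) E
          = integral\<^sup>L lebesgue (\<lambda>x. indicator UNIV x *\<^sub>R E x - indicator A x *\<^sub>R E x)"
        unfolding set_lebesgue_integral_def
        by (intro Bochner_Integration.integral_cong) (auto simp: indicator_def)
      also have "\<dots> = set_lebesgue_integral lebesgue UNIV E - set_lebesgue_integral lebesgue A E"
        unfolding set_lebesgue_integral_def
        using intE As by (intro Bochner_Integration.integral_diff integrable_mult_indicator) auto
      finally show ?case using all compl.IH by simp
    next
      case (union A)
      have As: "A i \<in> sets lebesgue" for i
        using union.hyps(2) by (intro b2l) auto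
      have "set_lebesgue_integral lebesgue (\<Union>i. A i) E = (\<Sum>i. set_lebesgue_integral lebesgue (A i) E)"
      proof (rule lebesgue_integral_countable_add)
        show "A i \<in> sets lebesgue" for i by (rule As)
        show "A i \<inter> A j = {}" if "i \<noteq> j" for i j using union.hyps(1) that by (simp add: disjoint_family_on_def)
        show "set_integrable lebesgue (\<Union>i. A i) E"
          unfolding set_integrable_def using As intE by (intro integrable_mult_indicator) auto
      qed
      then show ?case using union.IH by simp
    qed
  qed
  have leb_sets: "set_lebesgue_integral lebesgue A E = 0" if A: "A \<in> sets lebesgue" for A
  proof -
    obtain S N N' where eqs: "A = S \<union> N" "N \<subseteq> N'" "N' \<in> null_sets lborel" "S \<in> sets lborel"
      using sets_completionE[OF A] by blast
    have "AE x in lebesgue. x \<notin> N'"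
      using eqs(3) by (intro AE_not_in null_sets_completionI)
    then have "AE x in lebesgue. indicator A x *\<^sub>R E x = indicator S x *\<^sub>R E x"
      by eventually_elim (use eqs(1,2) in \<open>auto simp: indicator_def\<close>)
    moreover have "(\<lambda>x. indicator A x *\<^sub>R E x) \<in> borel_measurable lebesgue"
      using intE A by (intro borel_measurable_integrable integrable_mult_indicator)
    moreover have "S \<in> sets lebesgue" using eqs(4) by simp
    then have "(\<lambda>x. indicator S x *\<^sub>R E x) \<in> borel_measurable lebesgue"
      using intE by (intro borel_measurable_integrable integrable_mult_indicator)
    ultimately have "set_lebesgue_integral lebesgue A E = set_lebesgue_integral lebesgue S E"
      unfolding set_lebesgue_integral_def by (intro integral_cong_AE) auto
    also have "\<dots> = 0" using borel_sets eqs(4) by simp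
    finally show ?thesis .
  qed
  interpret fm: finite_measure M01 by (rule M01_finite)
  show ?thesis
  proof (rule fm.density_zero[OF int])
    fix A assume A: "A \<in> sets M01"
    then have As: "A \<in> sets lebesgue" and Asub: "A \<subseteq> {0..1}"
      by (auto simp: sets_restrict_space_iff)
    have "set_lebesgue_integral M01 A e = integral\<^sup>L lebesgue (\<lambda>x. indicator {0..1} x *\<^sub>R (indicator A x *\<^sub>R e x))"
      unfolding set_lebesgue_integral_def by (rule integral_restrict_space) simp
    also have "\<dots> = set_lebesgue_integral lebesgue A E"
      unfolding set_lebesgue_integral_def E_def
      by (intro Bochner_Integration.integral_cong) (auto simp: indicator_def)
    finally show "set_lebesgue_integral M01 A e = 0" using leb_sets[OF As] by simp
  qed
qed

lemma integral_lebesgue_on_indicator':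
  fixes e :: "real \<Rightarrow> 'a::{banach,second_countable_topology}"
  shows "integral\<^sup>L (lebesgue_on {a..b}) e = integral\<^sup>L lebesgue (\<lambda>x. indicator {a..b} x *\<^sub>R e x)"
  by (rule integral_restrict_space) simp

lemma id_meas_M01[measurable]: "(\<lambda>x. x) \<in> borel_measurable M01"
  by (rule continuous_imp_measurable_on_sets_lebesgue) (auto intro: continuous_intros)

lemma pow_integral:
  assumes t: "t \<in> {0..1::real}"
  shows "integral\<^sup>L M01 (\<lambda>x. if t \<le> x then x ^ m else 0) = (1 - t ^ (m + 1)) / (real m + 1)"
proof -
  have "integral\<^sup>L M01 (\<lambda>x. if t \<le> x then x ^ m else 0) = integral\<^sup>L lebesgue (\<lambda>x. x ^ m * indicator {t..1} x)"
    unfolding integral_lebesgue_on_indicator'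
    by (intro Bochner_Integration.integral_cong) (use t in \<open>auto simp: indicator_def\<close>)
  also have "\<dots> = integral\<^sup>L lborel (\<lambda>x. x ^ m * indicator {t..1} x)"
    by (rule integral_completion) simp
  also have "\<dots> = (1 ^ Suc m - t ^ Suc m) / Suc m"
    using t by (intro integral_power) auto
  finally show ?thesis by simp
qed

lemma fubini_moment:
  fixes e :: "real \<Rightarrow> complex"
  assumes int: "integrable M01 e"
  shows "L2_inner (volterra e) (\<lambda>x. complex_of_real (x ^ m))
       = (1 / (of_nat m + 1)) * (L2_inner e (\<lambda>x. complex_of_real (x ^ 0)) - L2_inner e (\<lambda>x. complex_of_real (x ^ (m + 1))))"
proof -
  interpret fm: finite_measure M01 by (rule M01_finite)
  interpret p: pair_sigma_finite M01 M01
    unfolding pair_sigma_finite_def using fm.sigma_finite_measure_axioms by simp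
  have em[measurable]: "e \<in> borel_measurable M01" using int by (rule borel_measurable_integrable)
  define G where "G = (\<lambda>(x::real, t::real). if t \<le> x then e t * complex_of_real (x ^ m) else 0)"
  have Gm: "G \<in> borel_measurable (M01 \<Otimes>\<^sub>M M01)" unfolding G_def by measurable
  have Bint: "integrable (M01 \<Otimes>\<^sub>M M01) (\<lambda>(x::real, t::real). norm (e t))"
  proof (rule p.Fubini_integrable)
    show "(\<lambda>(x::real, t::real). norm (e t)) \<in> borel_measurable (M01 \<Otimes>\<^sub>M M01)" by measurable
    show "integrable M01 (\<lambda>x. LINT y|M01. norm (case (x, y) of (x, t) \<Rightarrow> norm (e t)))"
      by (simp add: M01_integrable_const)
    show "AE x in M01. integrable M01 (\<lambda>y. case (x, y) of (x, t) \<Rightarrow> norm (e t))"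
      using int by simp
  qed
  have Gint: "integrable (M01 \<Otimes>\<^sub>M M01) G"
  proof (rule Bochner_Integration.integrable_bound[OF Bint Gm])
    show "AE p in M01 \<Otimes>\<^sub>M M01. norm (G p) \<le> norm (case p of (x, t) \<Rightarrow> norm (e t))"
    proof (rule AE_I2)
      fix p assume "p \<in> space (M01 \<Otimes>\<^sub>M M01)"
      then obtain x t where p: "p = (x, t)" "x \<in> {0..1}" "t \<in> {0..1}"
        by (auto simp: space_pair_measure)
      have "\<bar>x ^ m\<bar> \<le> 1" using p by (simp add: abs_le_iff power_le_one)
      then have "norm (e t) * \<bar>x ^ m\<bar> \<le> norm (e t)" by (simp add: mult_left_le)
      then show "norm (G p) \<le> norm (case p of (x, t) \<Rightarrow> norm (e t))"
        using p by (simp add: G_def norm_mult norm_power)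
    qed
  qed
  have F: "(LINT t|M01. LINT x|M01. G (x, t)) = (LINT x|M01. LINT t|M01. G (x, t))"
    using p.Fubini_integral[of "\<lambda>x t. G (x, t)"] Gint by simp
  have inner_t: "(LINT t|M01. G (x, t)) = integral\<^sup>L (lebesgue_on {0..x}) e * complex_of_real (x ^ m)"
    if x: "x \<in> {0..1}" for x
  proof -
    have "(LINT t|M01. G (x, t)) = (LINT t|M01. (if t \<le> x then e t else 0) * complex_of_real (x ^ m))"
      by (intro Bochner_Integration.integral_cong) (auto simp: G_def)
    also have "\<dots> = (LINT t|M01. (if t \<le> x then e t else 0)) * complex_of_real (x ^ m)"
      by simp
    also have "(LINT t|M01. (if t \<le> x then e t else 0)) = integral\<^sup>L (lebesgue_on {0..x}) e"
      unfolding integral_lebesgue_on_indicator'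
      by (intro Bochner_Integration.integral_cong) (use x in \<open>auto simp: indicator_def\<close>)
    finally show ?thesis .
  qed
  have inner_x: "(LINT x|M01. G (x, t)) = e t * complex_of_real ((1 - t ^ (m + 1)) / (real m + 1))"
    if t: "t \<in> {0..1}" for t
  proof -
    have "(LINT x|M01. G (x, t)) = (LINT x|M01. e t * complex_of_real (if t \<le> x then x ^ m else 0))"
      by (intro Bochner_Integration.integral_cong) (auto simp: G_def)
    also have "\<dots> = e t * complex_of_real (LINT x|M01. (if t \<le> x then x ^ m else 0))"
      by simp
    also have "\<dots> = e t * complex_of_real ((1 - t ^ (m + 1)) / (real m + 1))"
      using pow_integral[OF t] by simp
    finally show ?thesis .
  qed
  have "L2_inner (volterra e) (\<lambda>x. complex_of_real (x ^ m)) = (LINT x|M01. LINT t|M01. G (x, t))"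
    unfolding L2_inner_def volterra_def
    by (intro Bochner_Integration.integral_cong) (use inner_t in auto)
  also have "\<dots> = (LINT t|M01. LINT x|M01. G (x, t))" using F by simp
  also have "\<dots> = (LINT t|M01. (1 / (of_nat m + 1)) * (e t - e t * complex_of_real (t ^ (m + 1))))"
  proof (intro Bochner_Integration.integral_cong refl)
    fix t assume "t \<in> space M01"
    then have t: "t \<in> {0..1}" by simp
    have "complex_of_real ((1 - t ^ (m + 1)) / (real m + 1)) = (1 - complex_of_real (t ^ (m + 1))) / (of_nat m + 1)"
      by simp
    then show "(LINT x|M01. G (x, t)) = (1 / (of_nat m + 1)) * (e t - e t * complex_of_real (t ^ (m + 1)))"
      unfolding inner_x[OF t] by (simp add: field_simps)
  qed
  also have "\<dots> = (1 / (of_nat m + 1)) * ((LINT t|M01. e t) - (LINT t|M01. e t * complex_of_real (t ^ (m + 1))))"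
  proof -
    have i2: "integrable M01 (\<lambda>t. e t * complex_of_real (t ^ (m + 1)))"
    proof (rule Bochner_Integration.integrable_bound[OF int])
      show "(\<lambda>t. e t * complex_of_real (t ^ (m + 1))) \<in> borel_measurable M01" by measurable
      show "AE t in M01. norm (e t * complex_of_real (t ^ (m + 1))) \<le> norm (e t)"
      proof (rule AE_I2)
        fix t assume "t \<in> space M01"
        then have t01: "0 \<le> t" "t \<le> 1" by auto
        have "\<bar>t ^ (m + 1)\<bar> \<le> 1" using power_le_one[OF t01, of "m+1"] t01 by simp
        then have c1: "norm (complex_of_real (t ^ (m + 1))) \<le> 1" by (simp only: norm_of_real)
        show "norm (e t * complex_of_real (t ^ (m + 1))) \<le> norm (e t)"
          unfolding norm_mult using mult_left_le[OF c1 norm_ge_zero] .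
      qed
    qed
    show ?thesis using int i2 by simp
  qed
  also have "\<dots> = (1 / (of_nat m + 1)) * (L2_inner e (\<lambda>x. complex_of_real (x ^ 0)) - L2_inner e (\<lambda>x. complex_of_real (x ^ (m + 1))))"
    unfolding L2_inner_def by simp
  finally show ?thesis .
qed

lemma moments_zero_ae:
  fixes e :: "real \<Rightarrow> complex"
  assumes int: "integrable M01 e" and mom: "\<And>n. L2_inner e (\<lambda>x. complex_of_real (x ^ n)) = 0"
  shows "AE x in M01. e x = 0"
proof (rule ae_zero_of_intervals[OF int])
  define F where "F = volterra e"
  have Fc: "continuous_on {0..1} F"
    unfolding F_def volterra_def by (rule indefinite_integral_continuous_real[OF int])
  have Fi: "integral\<^sup>L M01 (\<lambda>x. F x * complex_of_real (x ^ i)) = 0" for i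
  proof -
    have "L2_inner F (\<lambda>x. complex_of_real (x ^ i)) = 0"
      unfolding F_def fubini_moment[OF int] mom by simp
    then show ?thesis by (simp add: L2_inner_def)
  qed
  have cint: "integrable M01 g" if "continuous_on {0..1} g" for g :: "real \<Rightarrow> complex"
    using continuous_imp_integrable_real[OF that] .
  have Fp: "integral\<^sup>L M01 (\<lambda>x. F x * complex_of_real (p x)) = 0" if p: "real_polynomial_function p" for p
  proof -
    obtain a n where pe: "p = (\<lambda>x. \<Sum>i\<le>n. a i * x ^ i)"
      using p real_polynomial_function_iff_sum by blast
    have "integral\<^sup>L M01 (\<lambda>x. F x * complex_of_real (p x))
        = integral\<^sup>L M01 (\<lambda>x. \<Sum>i\<le>n. complex_of_real (a i) * (F x * complex_of_real (x ^ i)))"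
      unfolding pe by (simp add: sum_distrib_left algebra_simps)
    also have "\<dots> = (\<Sum>i\<le>n. integral\<^sup>L M01 (\<lambda>x. complex_of_real (a i) * (F x * complex_of_real (x ^ i))))"
      by (rule Bochner_Integration.integral_sum) (intro Bochner_Integration.integrable_mult_right cint continuous_intros Fc)
    also have "\<dots> = 0" using Fi by simp
    finally show ?thesis .
  qed
  define I where "I = integral\<^sup>L M01 (\<lambda>x. (cmod (F x))\<^sup>2)"
  define C where "C = integral\<^sup>L M01 (\<lambda>x. cmod (F x))"
  have Ic: "continuous_on {0..1} (\<lambda>x. (cmod (F x))\<^sup>2)" by (intro continuous_intros Fc)
  have I0: "I \<ge> 0" unfolding I_def by (rule Bochner_Integration.integral_nonneg) simp
  have C0: "C \<ge> 0" unfolding C_def by (rule Bochner_Integration.integral_nonneg) simp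
  have Ibound: "I \<le> 2 * \<epsilon> * C" if eps: "\<epsilon> > 0" for \<epsilon>
  proof -
    have cRe: "continuous_on {0..1} (\<lambda>x. Re (F x))" and cIm: "continuous_on {0..1} (\<lambda>x. Im (F x))"
      by (intro continuous_intros Fc)+
    obtain p1 where p1: "real_polynomial_function p1" "\<And>x. x \<in> {0..1} \<Longrightarrow> \<bar>Re (F x) - p1 x\<bar> < \<epsilon>"
      using Stone_Weierstrass_real_polynomial_function[OF compact_Icc cRe eps] by blast
    obtain p2 where p2: "real_polynomial_function p2" "\<And>x. x \<in> {0..1} \<Longrightarrow> \<bar>Im (F x) - p2 x\<bar> < \<epsilon>"
      using Stone_Weierstrass_real_polynomial_function[OF compact_Icc cIm eps] by blast
    define q where "q x = complex_of_real (p1 x) - \<i> * complex_of_real (p2 x)" for x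
    have p1c: "continuous_on {0..1} p1" using p1(1)
      by (intro continuous_on_polymonial_function) (simp add: real_polynomial_function_eq)
    have p2c: "continuous_on {0..1} p2" using p2(1)
      by (intro continuous_on_polymonial_function) (simp add: real_polynomial_function_eq)
    have qc: "continuous_on {0..1} q" unfolding q_def by (intro continuous_intros p1c p2c)
    have i1: "integrable M01 (\<lambda>x. F x * complex_of_real (p1 x))" by (intro cint continuous_intros Fc p1c)
    have i2: "integrable M01 (\<lambda>x. F x * complex_of_real (p2 x))" by (intro cint continuous_intros Fc p2c)
    have Fq: "integral\<^sup>L M01 (\<lambda>x. F x * q x) = 0"
    proof -
      have "integral\<^sup>L M01 (\<lambda>x. F x * q x) = integral\<^sup>L M01 (\<lambda>x. F x * complex_of_real (p1 x) - \<i> * (F x * complex_of_real (p2 x)))"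
        unfolding q_def by (simp add: algebra_simps)
      also have "\<dots> = integral\<^sup>L M01 (\<lambda>x. F x * complex_of_real (p1 x)) - \<i> * integral\<^sup>L M01 (\<lambda>x. F x * complex_of_real (p2 x))"
        using i1 i2 by simp
      also have "\<dots> = 0" using Fp[OF p1(1)] Fp[OF p2(1)] by simp
      finally show ?thesis .
    qed
    have iFF: "integrable M01 (\<lambda>x. F x * cnj (F x))" by (intro cint continuous_intros Fc)
    have iFq: "integrable M01 (\<lambda>x. F x * q x)" by (intro cint continuous_intros Fc qc)
    have "complex_of_real I = integral\<^sup>L M01 (\<lambda>x. complex_of_real ((cmod (F x))\<^sup>2))"
      unfolding I_def by (rule integral_complex_of_real[symmetric])
    also have "\<dots> = integral\<^sup>L M01 (\<lambda>x. F x * cnj (F x))"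
      by (intro Bochner_Integration.integral_cong refl complex_norm_square)
    also have "\<dots> = integral\<^sup>L M01 (\<lambda>x. F x * cnj (F x)) - integral\<^sup>L M01 (\<lambda>x. F x * q x)"
      using Fq by simp
    also have "\<dots> = integral\<^sup>L M01 (\<lambda>x. F x * (cnj (F x) - q x))"
      using iFF iFq by (simp add: algebra_simps)
    finally have Ieq: "complex_of_real I = integral\<^sup>L M01 (\<lambda>x. F x * (cnj (F x) - q x))" .
    have "norm (integral\<^sup>L M01 (\<lambda>x. F x * (cnj (F x) - q x))) \<le> integral\<^sup>L M01 (\<lambda>x. cmod (F x) * (2 * \<epsilon>))"
    proof (rule Bochner_Integration.integral_norm_bound_integral)
      show "integrable M01 (\<lambda>x. F x * (cnj (F x) - q x))" by (intro cint continuous_intros Fc qc)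
      show "integrable M01 (\<lambda>x. cmod (F x) * (2 * \<epsilon>))"
        by (intro Bochner_Integration.integrable_mult_left Bochner_Integration.integrable_norm cint Fc)
      fix x assume "x \<in> space M01"
      then have x: "x \<in> {0..1}" by simp
      define u where "u = Re (F x) - p1 x"
      define v where "v = Im (F x) - p2 x"
      have e1: "cnj (F x) - q x = complex_of_real u - \<i> * complex_of_real v"
        unfolding q_def u_def v_def by (simp add: complex_eq_iff)
      have "cmod (cnj (F x) - q x) \<le> cmod (complex_of_real u) + cmod (\<i> * complex_of_real v)"
        unfolding e1 by (rule norm_triangle_ineq4)
      also have "\<dots> = \<bar>Re (F x) - p1 x\<bar> + \<bar>Im (F x) - p2 x\<bar>"
        unfolding u_def[symmetric] v_def[symmetric] by (simp add: norm_mult)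
      also have "\<dots> \<le> 2 * \<epsilon>" using p1(2)[OF x] p2(2)[OF x] by simp
      finally have "cmod (cnj (F x) - q x) \<le> 2 * \<epsilon>" .
      then show "norm (F x * (cnj (F x) - q x)) \<le> cmod (F x) * (2 * \<epsilon>)"
        unfolding norm_mult by (intro mult_left_mono) auto
    qed
    also have "\<dots> = 2 * \<epsilon> * C" unfolding C_def by simp
    finally have h: "cmod (integral\<^sup>L M01 (\<lambda>x. F x * (cnj (F x) - q x))) \<le> 2 * \<epsilon> * C" .
    show ?thesis using h I0 unfolding Ieq[symmetric] by simp
  qed
  have I_zero: "I = 0"
  proof (rule ccontr)
    assume "I \<noteq> 0"
    then have Ip: "I > 0" using I0 by simp
    define \<epsilon> where "\<epsilon> = I / (4 * (C + 1))"
    have ep: "\<epsilon> > 0" unfolding \<epsilon>_def using Ip C0 by simp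
    have "I \<le> 2 * \<epsilon> * C" by (rule Ibound[OF ep])
    also have "2 * \<epsilon> * C = I * (C / (2 * (C + 1)))" unfolding \<epsilon>_def using C0 by (simp add: field_simps)
    also have "\<dots> < I * 1"
    proof (rule mult_strict_left_mono[OF _ Ip])
      show "C / (2 * (C + 1)) < 1" using C0 by (simp add: field_simps)
    qed
    finally show False by simp
  qed
  have F0: "\<forall>x\<in>{0..1}. (cmod (F x))\<^sup>2 = 0"
    using integralL_eq_0_iff[OF Ic] I_zero unfolding I_def by simp
  show "integral\<^sup>L (lebesgue_on {0..c}) e = 0" if "c \<in> {0..1}" for c
    using F0 that unfolding F_def volterra_def by simp
qed

lemma AE_M01_nz: "AE x in M01. x \<noteq> 0"
proof -
  have "{0::real} \<in> null_sets lebesgue" using negligible_iff_null_sets negligible_sing by blast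
  then have "{0::real} \<in> null_sets M01" by (subst null_sets_restrict_space) auto
  then show ?thesis by (rule AE_mp[OF AE_not_in]) auto
qed

lemma int_mult_bounded:
  fixes e :: "real \<Rightarrow> complex"
  assumes int: "integrable M01 e" and gc: "continuous_on {0..1} g" and gb: "\<And>x. x \<in> {0..1} \<Longrightarrow> norm (g x) \<le> 1"
  shows "integrable M01 (\<lambda>x. e x * g x)"
proof (rule Bochner_Integration.integrable_bound[OF int])
  have [measurable]: "e \<in> borel_measurable M01" using int by (rule borel_measurable_integrable)
  have [measurable]: "g \<in> borel_measurable M01" by (rule continuous_imp_measurable_on_sets_lebesgue[OF gc]) simp
  show "(\<lambda>x. e x * g x) \<in> borel_measurable M01" by measurable
  show "AE x in M01. norm (e x * g x) \<le> norm (e x)"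
  proof (rule AE_I2)
    fix x assume "x \<in> space M01"
    then have "norm (g x) \<le> 1" using gb by simp
    then show "norm (e x * g x) \<le> norm (e x)" unfolding norm_mult using mult_left_le[OF _ norm_ge_zero] by blast
  qed
qed

lemma int_mon:
  fixes e :: "real \<Rightarrow> complex"
  assumes int: "integrable M01 e"
  shows "integrable M01 (\<lambda>x. e x * cnj (complex_of_real (x ^ n)))"
proof (rule int_mult_bounded[OF int])
  show "continuous_on {0..1} (\<lambda>x. cnj (complex_of_real (x ^ n)))" by (intro continuous_intros)
  fix x :: real assume "x \<in> {0..1}"
  then have "\<bar>x ^ n\<bar> \<le> 1" by (simp add: power_le_one abs_le_iff)
  then show "norm (cnj (complex_of_real (x ^ n))) \<le> 1" by (simp only: complex_cnj_complex_of_real norm_of_real)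
qed

lemma int_multx:
  fixes e :: "real \<Rightarrow> complex"
  assumes int: "integrable M01 e"
  shows "integrable M01 (\<lambda>x. complex_of_real x * e x)"
proof -
  have "integrable M01 (\<lambda>x. e x * complex_of_real x)"
  proof (rule int_mult_bounded[OF int])
    show "continuous_on {0..1} (\<lambda>x. complex_of_real x)" by (intro continuous_intros)
  qed auto
  then show ?thesis by (simp add: mult.commute)
qed

lemma L2_inner_diff:
  assumes "integrable M01 a" "integrable M01 b"
  shows "L2_inner (\<lambda>x. 1 * a x + (-1) * b x) (\<lambda>x. complex_of_real (x ^ n))
       = L2_inner a (\<lambda>x. complex_of_real (x ^ n)) - L2_inner b (\<lambda>x. complex_of_real (x ^ n))"
  unfolding L2_inner_def using int_mon[OF assms(1), of n] int_mon[OF assms(2), of n]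
  by (simp add: algebra_simps)

lemma L2_inner_multx:
  "L2_inner (\<lambda>x. complex_of_real x * e x) (\<lambda>x. complex_of_real (x ^ n)) = L2_inner e (\<lambda>x. complex_of_real (x ^ (n + 1)))"
  unfolding L2_inner_def by (intro Bochner_Integration.integral_cong) auto

lemma moments_zero_ae1:
  fixes e :: "real \<Rightarrow> complex"
  assumes int: "integrable M01 e" and mom: "\<And>n. n \<ge> 1 \<Longrightarrow> L2_inner e (\<lambda>x. complex_of_real (x ^ n)) = 0"
  shows "AE x in M01. e x = 0"
proof -
  have "AE x in M01. complex_of_real x * e x = 0"
  proof (rule moments_zero_ae[OF int_multx[OF int]])
    fix n show "L2_inner (\<lambda>x. complex_of_real x * e x) (\<lambda>x. complex_of_real (x ^ n)) = 0"
      unfolding L2_inner_multx by (rule mom) simp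
  qed
  then show ?thesis using AE_M01_nz by eventually_elim simp
qed

lemma volterra_cont: "integrable M01 f \<Longrightarrow> continuous_on {0..1} (volterra f)"
  unfolding volterra_def by (rule indefinite_integral_continuous_real)

lemma volterra_meas[measurable]: "integrable M01 f \<Longrightarrow> volterra f \<in> borel_measurable M01"
  by (rule continuous_imp_measurable_on_sets_lebesgue[OF volterra_cont]) auto

lemma volterra_int: "integrable M01 f \<Longrightarrow> integrable M01 (volterra f)"
  by (rule continuous_imp_integrable_real[OF volterra_cont])

lemma hardy_meas: "integrable M01 f \<Longrightarrow> hardy_op f \<in> borel_measurable M01"
proof -
  assume i: "integrable M01 f"
  have [measurable]: "volterra f \<in> borel_measurable M01" using i by (rule volterra_meas)
  have "hardy_op f = (\<lambda>x. (1 / complex_of_real x) * volterra f x)"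
    by (simp add: hardy_op_def volterra_def)
  also have "\<dots> \<in> borel_measurable M01" by measurable
  finally show ?thesis .
qed

lemma fin:
  assumes U: "sarason_transform U" and h: "h \<in> L2" and Tm: "T \<in> borel_measurable M01"
    and ae: "AE x in M01. T x = h x"
  shows "T \<in> L2 \<and> H2_eq (U T) (U h)"
proof -
  have hm: "h \<in> borel_measurable M01" using h by (rule L2_measurable)
  have "integrable M01 (\<lambda>x. (cmod (T x))\<^sup>2) = integrable M01 (\<lambda>x. (cmod (h x))\<^sup>2)"
    by (rule integrable_cong_AE) (use Tm hm ae in \<open>auto elim: AE_mp\<close>)
  then have TL: "T \<in> L2" using Tm h by (simp add: L2_def)
  define d where "d = (\<lambda>x. 1 * T x + (-1) * h x)"
  have dL: "d \<in> L2" unfolding d_def by (rule L2_lin[OF TL h])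
  have Ud: "H2_eq (U d) (\<lambda>z. 1 * U T z + (-1) * U h z)" unfolding d_def by (rule U_lin[OF U TL h])
  have "AE x in M01. d x * cnj (d x) = 0" using ae by eventually_elim (simp add: d_def)
  then have "L2_inner d d = 0" unfolding L2_inner_def by (rule integral_eq_zero_AE)
  then have "H2_inner (U d) (U d) = 0" using U_inner[OF U dL dL] by simp
  then have "\<forall>z\<in>disc. U d z = 0" using H2_norm_zero U_H2[OF U dL] by blast
  then have "H2_eq (U T) (U h)" using Ud by (simp add: H2_eq_def)
  then show ?thesis using TL by simp
qed

lemma shiftmom:
  assumes U: "sarason_transform U" and S: "H2_adjoint_of Sstar shift" and w: "w \<in> H2"
    and c: "c \<in> L2" and wc: "H2_eq w (U c)" and y: "y \<in> L2" and yS: "H2_eq (U y) (Sstar w)" and n: "n \<ge> 1"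
  shows "L2_inner y (mon n) = ((of_nat n + 1) / of_nat n) * L2_inner c (mon n) + (-1 / of_nat n) * L2_inner c (mon 0)"
proof -
  have r: "(\<lambda>x. ((of_nat n + 1) / of_nat n) * mon n x + (-1 / of_nat n) * mon 0 x) \<in> L2"
    by (rule L2_lin[OF mono_L2 mono_L2])
  have "L2_inner y (mon n) = L2_inner c (\<lambda>x. ((of_nat n + 1) / of_nat n) * mon n x + (-1 / of_nat n) * mon 0 x)"
    using adj_moment[where U=U and B=Sstar and Op=shift and w=w and c=c and y=y and n=n
        and r="\<lambda>x. ((of_nat n + 1) / of_nat n) * mon n x + (-1 / of_nat n) * mon 0 x"]
      U S w c wc y yS r shift_mon[OF U n] by blast
  also have "\<dots> = cnj ((of_nat n + 1) / of_nat n) * L2_inner c (mon n) + cnj (-1 / of_nat n) * L2_inner c (mon 0)"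
    by (rule L2_inner_lin2[OF c mono_L2 mono_L2])
  finally show ?thesis by simp
qed

lemma gammamom:
  assumes U: "sarason_transform U" and C: "H2_adjoint_of Cstar comp_gamma" and w: "w \<in> H2"
    and c: "c \<in> L2" and wc: "H2_eq w (U c)" and y: "y \<in> L2" and yC: "H2_eq (U y) (Cstar w)"
  shows "L2_inner y (mon n) = (1 / (of_nat n + 1)) * L2_inner c (mon 0) + (of_nat n / (of_nat n + 1)) * L2_inner c (mon (n + 1))"
proof -
  have r: "(\<lambda>x. (1 / (of_nat n + 1)) * mon 0 x + (of_nat n / (of_nat n + 1)) * mon (n + 1) x) \<in> L2"
    by (rule L2_lin[OF mono_L2 mono_L2])
  have "L2_inner y (mon n) = L2_inner c (\<lambda>x. (1 / (of_nat n + 1)) * mon 0 x + (of_nat n / (of_nat n + 1)) * mon (n + 1) x)"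
    using adj_moment[where U=U and B=Cstar and Op=comp_gamma and w=w and c=c and y=y and n=n
        and r="\<lambda>x. (1 / (of_nat n + 1)) * mon 0 x + (of_nat n / (of_nat n + 1)) * mon (n + 1) x"]
      U C w c wc y yC r gamma_mon[OF U, of n] by blast
  also have "\<dots> = cnj (1 / (of_nat n + 1)) * L2_inner c (mon 0) + cnj (of_nat n / (of_nat n + 1)) * L2_inner c (mon (n + 1))"
    by (rule L2_inner_lin2[OF c mono_L2 mono_L2])
  finally show ?thesis by simp
qed

lemma alg_X:
  fixes c a b :: complex
  assumes "c \<noteq> 0" "c + 1 \<noteq> 0"
  shows "((c + 1) / c) * ((1 / (c + 1)) * a + (c / (c + 1)) * b) + (-1 / c) * ((1 / (0 + 1)) * a + (0 / (0 + 1)) * b') = b"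
  using assms by (simp add: divide_simps)

lemma nz1: "(of_nat n + 1 :: complex) \<noteq> 0" "(1 + of_nat n :: complex) \<noteq> 0"
  by (metis of_nat_Suc of_nat_eq_0_iff nat.distinct(1) add.commute Suc_eq_plus1)+

lemma algX: "k \<noteq> 0 \<Longrightarrow> k+1 \<noteq> 0 \<Longrightarrow> (k+1)/k * ((1/(k+1)) * a + (k/(k+1)) * b) + (-1/k) * a = (b::complex)"
  by (simp add: divide_simps)
lemma algH: "j \<noteq> 0 \<Longrightarrow> (1/j) * (a - b) - (b - ((j+1)/j * b + (-1/j) * a)) = (0::complex)"
  by (simp add: divide_simps) (simp add: algebra_simps)
lemma algV: "k \<noteq> 0 \<Longrightarrow> k+1 \<noteq> 0 \<Longrightarrow> (1/(k+1))*(a - b) - (((1/(k+1))*a + (k/(k+1))*b) - ((k+1)/k * ((1/(k+1))*a + (k/(k+1))*b) + (-1/k)*a)) = (0::complex)"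
  by (simp add: divide_simps) (simp add: algebra_simps)

lemma case_X:
  assumes U: "sarason_transform U" and S: "H2_adjoint_of Sstar shift" and C: "H2_adjoint_of Cstar comp_gamma"
    and g: "g \<in> H2" and f: "f \<in> L2" and fg: "H2_eq (U f) g"
  shows "H2_eq (U (mult_x f)) (Sstar (Cstar g))"
proof -
  have Cg: "Cstar g \<in> H2" using C g by (simp add: H2_adjoint_of_def)
  have SCg: "Sstar (Cstar g) \<in> H2" using S Cg by (simp add: H2_adjoint_of_def)
  obtain c where c: "c \<in> L2" "H2_eq (U c) (Cstar g)" using U_surj[OF U Cg] by blast
  obtain s where s: "s \<in> L2" "H2_eq (U s) (Sstar (Cstar g))" using U_surj[OF U SCg] by blast
  define mu where "mu k = L2_inner f (mon k)" for k
  have gf: "H2_eq g (U f)" by (rule H2_eq_sym[OF fg])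
  have Ic: "L2_inner c (mon m) = (1 / (of_nat m + 1)) * mu 0 + (of_nat m / (of_nat m + 1)) * mu (m + 1)" for m
    using gammamom[where U=U and Cstar=Cstar, OF U C g f gf c(1) c(2), of m] unfolding mu_def .
  have Is: "L2_inner s (mon n) = mu (n + 1)" if n: "n \<ge> 1" for n
  proof -
    have "L2_inner s (mon n) = ((of_nat n + 1) / of_nat n) * L2_inner c (mon n) + (-1 / of_nat n) * L2_inner c (mon 0)"
      using shiftmom[where U=U and Sstar=Sstar, OF U S Cg c(1) H2_eq_sym[OF c(2)] s(1) s(2) n] .
    also have "\<dots> = ((of_nat n + 1) / of_nat n) * ((1 / (of_nat n + 1)) * mu 0 + (of_nat n / (of_nat n + 1)) * mu (n + 1)) + (-1 / of_nat n) * mu 0"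
      using Ic[of n] Ic[of 0] by simp
    also have "\<dots> = mu (n + 1)" by (rule algX) (use n nz1[of n] in auto)
    finally show ?thesis .
  qed
  have fint: "integrable M01 f" by (rule L2_integrable[OF f])
  have mxint: "integrable M01 (mult_x f)" unfolding mult_x_def by (rule int_multx[OF fint])
  have sint: "integrable M01 s" by (rule L2_integrable[OF s(1)])
  define d where "d = (\<lambda>x. 1 * mult_x f x + (-1) * s x)"
  have "AE x in M01. d x = 0"
  proof (rule moments_zero_ae1)
    show "integrable M01 d" unfolding d_def using mxint sint
      by (intro Bochner_Integration.integrable_add Bochner_Integration.integrable_mult_right)
    fix n :: nat assume n: "n \<ge> 1"
    have "L2_inner (mult_x f) (mon n) = mu (n + 1)"
      unfolding mu_def mult_x_def by (rule L2_inner_multx)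
    then show "L2_inner d (mon n) = 0"
      unfolding d_def L2_inner_diff[OF mxint sint] Is[OF n] by simp
  qed
  then have ae: "AE x in M01. mult_x f x = s x" by eventually_elim (simp add: d_def)
  have mxm: "mult_x f \<in> borel_measurable M01" by (rule borel_measurable_integrable[OF mxint])
  have "H2_eq (U (mult_x f)) (U s)" using fin[where U=U, OF U s(1) mxm ae] by simp
  then show ?thesis using s(2) H2_eq_trans by blast
qed

lemma case_H:
  assumes U: "sarason_transform U" and S: "H2_adjoint_of Sstar shift"
    and g: "g \<in> H2" and f: "f \<in> L2" and fg: "H2_eq (U f) g"
  shows "H2_eq (U (hardy_op f)) (\<lambda>z. g z - Sstar g z)"
proof -
  have Sg: "Sstar g \<in> H2" using S g by (simp add: H2_adjoint_of_def)
  obtain s where s: "s \<in> L2" "H2_eq (U s) (Sstar g)" using U_surj[OF U Sg] by blast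
  define mu where "mu k = L2_inner f (mon k)" for k
  have gf: "H2_eq g (U f)" by (rule H2_eq_sym[OF fg])
  define h where "h = (\<lambda>x. 1 * f x + (-1) * s x)"
  have hL: "h \<in> L2" unfolding h_def by (rule L2_lin[OF f s(1)])
  have Uh: "H2_eq (U h) (\<lambda>z. g z - Sstar g z)"
    using U_lin[OF U f s(1), of 1 "-1"] fg s(2) unfolding h_def H2_eq_def by simp
  have Is: "L2_inner s (mon n) = ((of_nat n + 1) / of_nat n) * mu n + (-1 / of_nat n) * mu 0" if n: "n \<ge> 1" for n
    using shiftmom[where U=U and Sstar=Sstar, OF U S g f gf s(1) s(2) n] unfolding mu_def .
  have fint: "integrable M01 f" by (rule L2_integrable[OF f])
  have sint: "integrable M01 s" by (rule L2_integrable[OF s(1)])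
  have hint: "integrable M01 h" by (rule L2_integrable[OF hL])
  have Ih: "L2_inner h (mon k) = mu k - L2_inner s (mon k)" for k
    unfolding h_def mu_def by (rule L2_inner_diff[OF fint sint])
  have vint: "integrable M01 (volterra f)" by (rule volterra_int[OF fint])
  have xhint: "integrable M01 (\<lambda>x. complex_of_real x * h x)" by (rule int_multx[OF hint])
  define d where "d = (\<lambda>x. 1 * volterra f x + (-1) * (complex_of_real x * h x))"
  have "AE x in M01. d x = 0"
  proof (rule moments_zero_ae1)
    show "integrable M01 d" unfolding d_def using vint xhint
      by (intro Bochner_Integration.integrable_add Bochner_Integration.integrable_mult_right)
    fix n :: nat assume n: "n \<ge> 1"
    have V: "L2_inner (volterra f) (mon n) = (1 / (of_nat n + 1)) * (mu 0 - mu (n + 1))"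
      unfolding mu_def by (rule fubini_moment[OF fint])
    have X: "L2_inner (\<lambda>x. complex_of_real x * h x) (mon n) = mu (n + 1) - L2_inner s (mon (n + 1))"
      unfolding L2_inner_multx Ih ..
    have n1: "n + 1 \<ge> 1" by simp
    show "L2_inner d (mon n) = 0"
      unfolding d_def L2_inner_diff[OF vint xhint] V X Is[OF n1] of_nat_add of_nat_1
      by (rule algH) (use nz1[of n] in auto)
  qed
  then have ae0: "AE x in M01. volterra f x = complex_of_real x * h x" by eventually_elim (simp add: d_def)
  have hv: "hardy_op f x = volterra f x / complex_of_real x" for x
    by (simp add: hardy_op_def volterra_def)
  have ae: "AE x in M01. hardy_op f x = h x"
    using ae0 AE_M01_nz by eventually_elim (simp add: hv)
  have "H2_eq (U (hardy_op f)) (U h)" using fin[where U=U, OF U hL hardy_meas[OF fint] ae] by simp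
  then show ?thesis using Uh H2_eq_trans by blast
qed

lemma case_V:
  assumes U: "sarason_transform U" and S: "H2_adjoint_of Sstar shift" and C: "H2_adjoint_of Cstar comp_gamma"
    and g: "g \<in> H2" and f: "f \<in> L2" and fg: "H2_eq (U f) g"
  shows "H2_eq (U (volterra f)) (\<lambda>z. Cstar g z - Sstar (Cstar g) z)"
proof -
  have Cg: "Cstar g \<in> H2" using C g by (simp add: H2_adjoint_of_def)
  have SCg: "Sstar (Cstar g) \<in> H2" using S Cg by (simp add: H2_adjoint_of_def)
  obtain c where c: "c \<in> L2" "H2_eq (U c) (Cstar g)" using U_surj[OF U Cg] by blast
  obtain s where s: "s \<in> L2" "H2_eq (U s) (Sstar (Cstar g))" using U_surj[OF U SCg] by blast
  define mu where "mu k = L2_inner f (mon k)" for k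
  have gf: "H2_eq g (U f)" by (rule H2_eq_sym[OF fg])
  have Ic: "L2_inner c (mon m) = (1 / (of_nat m + 1)) * mu 0 + (of_nat m / (of_nat m + 1)) * mu (m + 1)" for m
    using gammamom[where U=U and Cstar=Cstar, OF U C g f gf c(1) c(2), of m] unfolding mu_def .
  have Is: "L2_inner s (mon n) = ((of_nat n + 1) / of_nat n) * L2_inner c (mon n) + (-1 / of_nat n) * L2_inner c (mon 0)"
    if n: "n \<ge> 1" for n
    using shiftmom[where U=U and Sstar=Sstar, OF U S Cg c(1) H2_eq_sym[OF c(2)] s(1) s(2) n] .
  define h where "h = (\<lambda>x. 1 * c x + (-1) * s x)"
  have hL: "h \<in> L2" unfolding h_def by (rule L2_lin[OF c(1) s(1)])
  have Uh: "H2_eq (U h) (\<lambda>z. Cstar g z - Sstar (Cstar g) z)"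
    using U_lin[OF U c(1) s(1), of 1 "-1"] c(2) s(2) unfolding h_def H2_eq_def by simp
  have fint: "integrable M01 f" by (rule L2_integrable[OF f])
  have cint: "integrable M01 c" by (rule L2_integrable[OF c(1)])
  have sint: "integrable M01 s" by (rule L2_integrable[OF s(1)])
  have hint: "integrable M01 h" by (rule L2_integrable[OF hL])
  have vint: "integrable M01 (volterra f)" by (rule volterra_int[OF fint])
  define d where "d = (\<lambda>x. 1 * volterra f x + (-1) * h x)"
  have "AE x in M01. d x = 0"
  proof (rule moments_zero_ae1)
    show "integrable M01 d" unfolding d_def using vint hint
      by (intro Bochner_Integration.integrable_add Bochner_Integration.integrable_mult_right)
    fix n :: nat assume n: "n \<ge> 1"
    have V: "L2_inner (volterra f) (mon n) = (1 / (of_nat n + 1)) * (mu 0 - mu (n + 1))"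
      unfolding mu_def by (rule fubini_moment[OF fint])
    have Ic0: "L2_inner c (mon 0) = mu 0" using Ic[of 0] by simp
    have Icn: "L2_inner c (mon n) = (1 / (of_nat n + 1)) * mu 0 + (of_nat n / (of_nat n + 1)) * mu (n + 1)"
      by (rule Ic)
    have Ih: "L2_inner h (mon n) = L2_inner c (mon n) - L2_inner s (mon n)"
      unfolding h_def by (rule L2_inner_diff[OF cint sint])
    show "L2_inner d (mon n) = 0"
      unfolding d_def L2_inner_diff[OF vint hint] V Ih Is[OF n] Ic0 Icn
      by (rule algV) (use n nz1[of n] in auto)
  qed
  then have ae: "AE x in M01. volterra f x = h x" by eventually_elim (simp add: d_def)
  have "H2_eq (U (volterra f)) (U h)" using fin[where U=U, OF U hL volterra_meas[OF fint] ae] by simp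
  then show ?thesis using Uh H2_eq_trans by blast
qed

theorem proposition2p9:
  fixes U :: "(real \<Rightarrow> complex) \<Rightarrow> (complex \<Rightarrow> complex)"
    and Sstar Cstar :: "(complex \<Rightarrow> complex) \<Rightarrow> (complex \<Rightarrow> complex)"
  assumes "sarason_transform U"
    and "H2_adjoint_of Sstar shift"
    and "H2_adjoint_of Cstar comp_gamma"
  shows "conj_eq U hardy_op (\<lambda>g z. g z - Sstar g z) \<and>
         conj_eq U mult_x (\<lambda>g. Sstar (Cstar g)) \<and>
         conj_eq U volterra (\<lambda>g z. Cstar g z - Sstar (Cstar g) z)"
  using case_H[OF assms(1,2)] case_X[OF assms] case_V[OF assms]
  unfolding conj_eq_def by blast

end
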